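(* Let $\mathbb{C}$ and $\mathbb{I}$ be categories. Every parameterised monad on $\mathbb{C}$ indexed by $\mathbb{I}$ is a category-graded monad on $\mathbb{C}$ with a generalised unit; that is, there is an injective assignment sending each parameterised monad $(\mathsf{P}:\mathbb{I}^{\mathsf{op}}\times\mathbb{I}\to[\mathbb{C},\mathbb{C}],\mu^{\mathsf{P}},\eta^{\mathsf{P}})$ to a category-graded monad on $\mathbb{C}$ equipped with a generalised unit.
   Context: A parameterised monad on $\mathbb{C}$ indexed by $\mathbb{I}$ is a functor $\mathsf{P}:\mathbb{I}^{\mathsf{op}}\times\mathbb{I}\to[\mathbb{C},\mathbb{C}]$ with natural transformations $\eta^{\mathsf{P}}_I:\mathsf{Id}\to\mathsf{P}(I,I)$ and $\mu^{\mathsf{P}}_{I,J,K}:\mathsf{P}(I,J)\mathsf{P}(J,K)\to\mathsf{P}(I,K)$ satisfying the unit laws $\mu^{\mathsf{P}}_{I,I,J}\circ\eta^{\mathsf{P}}_I\mathsf{P}(I,J)=\mathrm{id}=\mu^{\mathsf{P}}_{I,J,J}\circ\mathsf{P}(I,J)\eta^{\mathsf{P}}_J$ and associativity $\mu^{\mathsf{P}}_{I,K,L}\circ\mu^{\mathsf{P}}_{I,J,K}\mathsf{P}(K,L)=\mu^{\mathsf{P}}_{I,J,L}\circ\mathsf{P}(I,J)\mu^{\mathsf{P}}_{J,K,L}$, with $\eta^{\mathsf{P}}$ dinatural in $I$ (i.e. $\mathsf{P}(I,f)\circ\eta^{\mathsf{P}}_I=\mathsf{P}(f,J)\circ\eta^{\mathsf{P}}_J$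 for $f:I\to J$) and $\mu^{\mathsf{P}}_{I,J,K}$ natural in $I,K$ and dinatural in $J$ (i.e. $\mu^{\mathsf{P}}_{I,J',K}\circ\mathsf{P}(I,g)\mathsf{P}(J',K)=\mu^{\mathsf{P}}_{I,J,K}\circ\mathsf{P}(I,J)\mathsf{P}(g,K)$ for $g:J\to J'$). A category-graded monad on $\mathbb{C}$ graded by a category $\mathbb{K}$ consists of endofunctors $\mathsf{T}_f$ for morphisms $f:I\to J$ of $\mathbb{K}$, natural transformations $\eta_I:\mathsf{Id}\to\mathsf{T}_{id_I}$ and $\mu_{f,g}:\mathsf{T}_f\mathsf{T}_g\to\mathsf{T}_{g\circ f}$ ($f:I\to J$, $g:J\to K$) with $\mu_{id_J,f}\circ\eta_J\mathsf{T}_f=\mathrm{id}_{\mathsf{T}_f}=\mu_{f,id_I}\circ\mathsf{T}_f\eta_I$ and $\mu_{g\circ f,h}\circ\mu_{f,g}\mathsf{T}_h=\mu_{f,h\circ g}\circ\mathsf{T}_f\mu_{g,h}$. A generalised unit for such a category-graded monad consists of a wide subcategory $\mathbb{S}\subseteq\mathbb{K}$ (same objects as $\mathbb{K}$) and natural transformations $\bar\eta_f:\mathsf{Id}\to\mathsf{T}_f$ for every morphism $f$ of $\mathbb{S}$, such that $\mu_{f,g}\circ\mathsf{T}_f\bar\eta_g\circ\bar\eta_f=\bar\eta_{g\circ f}$ for composable $f,g$ in $\mathbb{S}$ and $\bar\eta_{id_I}=\eta_I$ for every object $I$ (equivalently, a right lax natural transformation from the identity category-graded monad to $\mathsf{T}$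 restricted to $\mathbb{S}$, with identity component functors). *)

theory Defs
  imports Main
begin

record ('o,'a) cat =
  c_obj  :: "'o set"
  c_arr  :: "'a set"
  c_dom  :: "'a \<Rightarrow> 'o"
  c_cod  :: "'a \<Rightarrow> 'o"
  c_id   :: "'o \<Rightarrow> 'a"
  c_comp :: "'a \<Rightarrow> 'a \<Rightarrow> 'a"   (* c_comp C g f = g \<circ> f, defined when cod f = dom g *)

definition category :: "('o,'a) cat \<Rightarrow> bool" where
  "category C \<longleftrightarrow>
     (\<forall>f\<in>c_arr C. c_dom C f \<in> c_obj C \<and> c_cod C f \<in> c_obj C) \<and>
     (\<forall>x\<in>c_obj C. c_id C x \<in> c_arr C \<and> c_dom C (c_id C x) = x \<and> c_cod C (c_id C x) = x) \<and>
     (\<forall>f\<in>c_arr C. \<forall>g\<in>c_arr C. c_cod C f = c_dom C g \<longrightarrow>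
        c_comp C g f \<in> c_arr C \<and> c_dom C (c_comp C g f) = c_dom C f \<and>
        c_cod C (c_comp C g f) = c_cod C g) \<and>
     (\<forall>f\<in>c_arr C. c_comp C (c_id C (c_cod C f)) f = f \<and> c_comp C f (c_id C (c_dom C f)) = f) \<and>
     (\<forall>f\<in>c_arr C. \<forall>g\<in>c_arr C. \<forall>h\<in>c_arr C. c_cod C f = c_dom C g \<longrightarrow> c_cod C g = c_dom C h \<longrightarrow>
        c_comp C h (c_comp C g f) = c_comp C (c_comp C h g) f)"

type_synonym ('o,'a) efun = "('o \<Rightarrow> 'o) \<times> ('a \<Rightarrow> 'a)"

abbreviation fo :: "('o,'a) efun \<Rightarrow> 'o \<Rightarrow> 'o" where "fo F \<equiv> fst F"
abbreviation fa :: "('o,'a) efun \<Rightarrow> 'a \<Rightarrow> 'a" where "fa F \<equiv> snd F"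

definition endofunctor :: "('o,'a) cat \<Rightarrow> ('o,'a) efun \<Rightarrow> bool" where
  "endofunctor C F \<longleftrightarrow>
     (\<forall>x\<in>c_obj C. fo F x \<in> c_obj C) \<and>
     (\<forall>f\<in>c_arr C. fa F f \<in> c_arr C \<and> c_dom C (fa F f) = fo F (c_dom C f) \<and>
                   c_cod C (fa F f) = fo F (c_cod C f)) \<and>
     (\<forall>x\<in>c_obj C. fa F (c_id C x) = c_id C (fo F x)) \<and>
     (\<forall>f\<in>c_arr C. \<forall>g\<in>c_arr C. c_cod C f = c_dom C g \<longrightarrow>
        fa F (c_comp C g f) = c_comp C (fa F g) (fa F f))"

definition Id_fun :: "('o,'a) efun" where "Id_fun = (id, id)"

definition fcomp :: "('o,'a) efun \<Rightarrow> ('o,'a) efun \<Rightarrow> ('o,'a) efun" where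
  "fcomp F G = (fo F \<circ> fo G, fa F \<circ> fa G)"

definition nat_trans :: "('o,'a) cat \<Rightarrow> ('o,'a) efun \<Rightarrow> ('o,'a) efun \<Rightarrow> ('o \<Rightarrow> 'a) \<Rightarrow> bool" where
  "nat_trans C F G \<alpha> \<longleftrightarrow>
     (\<forall>x\<in>c_obj C. \<alpha> x \<in> c_arr C \<and> c_dom C (\<alpha> x) = fo F x \<and> c_cod C (\<alpha> x) = fo G x) \<and>
     (\<forall>f\<in>c_arr C. c_comp C (\<alpha> (c_cod C f)) (fa F f) = c_comp C (fa G f) (\<alpha> (c_dom C f)))"

text \<open>P : I^op \<times> I \<rightarrow> [C,C].  pm_obj P I J is the endofunctor P(I,J); for u : I' \<rightarrow> I and
  v : J \<rightarrow> J' in I, pm_arr P u v is (the components of) P(u,v) : P(I,J) \<rightarrow> P(I',J').\<close>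
record ('io,'ia,'co,'ca) pmonad =
  pm_obj :: "'io \<Rightarrow> 'io \<Rightarrow> ('co,'ca) efun"
  pm_arr :: "'ia \<Rightarrow> 'ia \<Rightarrow> 'co \<Rightarrow> 'ca"
  pm_eta :: "'io \<Rightarrow> 'co \<Rightarrow> 'ca"
  pm_mu  :: "'io \<Rightarrow> 'io \<Rightarrow> 'io \<Rightarrow> 'co \<Rightarrow> 'ca"

definition param_monad :: "('co,'ca) cat \<Rightarrow> ('io,'ia) cat \<Rightarrow> ('io,'ia,'co,'ca) pmonad \<Rightarrow> bool" where
  "param_monad C \<I> P \<longleftrightarrow>
    \<comment> \<open>P is a functor I^op \<times> I \<rightarrow> [C,C]\<close>
    (\<forall>i\<in>c_obj \<I>. \<forall>j\<in>c_obj \<I>. endofunctor C (pm_obj P i j)) \<and>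
    (\<forall>u\<in>c_arr \<I>. \<forall>v\<in>c_arr \<I>.
        nat_trans C (pm_obj P (c_cod \<I> u) (c_dom \<I> v)) (pm_obj P (c_dom \<I> u) (c_cod \<I> v)) (pm_arr P u v)) \<and>
    (\<forall>i\<in>c_obj \<I>. \<forall>j\<in>c_obj \<I>. \<forall>x\<in>c_obj C.
        pm_arr P (c_id \<I> i) (c_id \<I> j) x = c_id C (fo (pm_obj P i j) x)) \<and>
    (\<forall>u\<in>c_arr \<I>. \<forall>u'\<in>c_arr \<I>. \<forall>v\<in>c_arr \<I>. \<forall>v'\<in>c_arr \<I>. \<forall>x\<in>c_obj C.
        c_cod \<I> u' = c_dom \<I> u \<longrightarrow> c_cod \<I> v = c_dom \<I> v' \<longrightarrow>
        pm_arr P (c_comp \<I> u u') (c_comp \<I> v' v) x = c_comp C (pm_arr P u' v' x) (pm_arr P u v x)) \<and>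
    \<comment> \<open>eta and mu are natural transformations\<close>
    (\<forall>i\<in>c_obj \<I>. nat_trans C Id_fun (pm_obj P i i) (pm_eta P i)) \<and>
    (\<forall>i\<in>c_obj \<I>. \<forall>j\<in>c_obj \<I>. \<forall>k\<in>c_obj \<I>.
        nat_trans C (fcomp (pm_obj P i j) (pm_obj P j k)) (pm_obj P i k) (pm_mu P i j k)) \<and>
    \<comment> \<open>unit laws\<close>
    (\<forall>i\<in>c_obj \<I>. \<forall>j\<in>c_obj \<I>. \<forall>x\<in>c_obj C.
        c_comp C (pm_mu P i i j x) (pm_eta P i (fo (pm_obj P i j) x)) = c_id C (fo (pm_obj P i j) x) \<and>
        c_comp C (pm_mu P i j j x) (fa (pm_obj P i j) (pm_eta P j x)) = c_id C (fo (pm_obj P i j) x)) \<and>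
    \<comment> \<open>associativity\<close>
    (\<forall>i\<in>c_obj \<I>. \<forall>j\<in>c_obj \<I>. \<forall>k\<in>c_obj \<I>. \<forall>l\<in>c_obj \<I>. \<forall>x\<in>c_obj C.
        c_comp C (pm_mu P i k l x) (pm_mu P i j k (fo (pm_obj P k l) x)) =
        c_comp C (pm_mu P i j l x) (fa (pm_obj P i j) (pm_mu P j k l x))) \<and>
    \<comment> \<open>eta dinatural: P(I,f) \<circ> eta_I = P(f,J) \<circ> eta_J for f : I \<rightarrow> J\<close>
    (\<forall>f\<in>c_arr \<I>. \<forall>x\<in>c_obj C.
        c_comp C (pm_arr P (c_id \<I> (c_dom \<I> f)) f x) (pm_eta P (c_dom \<I> f) x) =
        c_comp C (pm_arr P f (c_id \<I> (c_cod \<I> f)) x) (pm_eta P (c_cod \<I> f) x)) \<and>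
    \<comment> \<open>mu natural in I: for u : I' \<rightarrow> I, P(u,K) \<circ> mu_{I,J,K} = mu_{I',J,K} \<circ> P(u,J)P(J,K)\<close>
    (\<forall>u\<in>c_arr \<I>. \<forall>j\<in>c_obj \<I>. \<forall>k\<in>c_obj \<I>. \<forall>x\<in>c_obj C.
        c_comp C (pm_arr P u (c_id \<I> k) x) (pm_mu P (c_cod \<I> u) j k x) =
        c_comp C (pm_mu P (c_dom \<I> u) j k x) (pm_arr P u (c_id \<I> j) (fo (pm_obj P j k) x))) \<and>
    \<comment> \<open>mu natural in K: for w : K \<rightarrow> K', P(I,w) \<circ> mu_{I,J,K} = mu_{I,J,K'} \<circ> P(I,J)P(J,w)\<close>
    (\<forall>i\<in>c_obj \<I>. \<forall>j\<in>c_obj \<I>. \<forall>w\<in>c_arr \<I>. \<forall>x\<in>c_obj C.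
        c_comp C (pm_arr P (c_id \<I> i) w x) (pm_mu P i j (c_dom \<I> w) x) =
        c_comp C (pm_mu P i j (c_cod \<I> w) x) (fa (pm_obj P i j) (pm_arr P (c_id \<I> j) w x))) \<and>
    \<comment> \<open>mu dinatural in J: for g : J \<rightarrow> J',
        mu_{I,J',K} \<circ> P(I,g)P(J',K) = mu_{I,J,K} \<circ> P(I,J)P(g,K)\<close>
    (\<forall>i\<in>c_obj \<I>. \<forall>g\<in>c_arr \<I>. \<forall>k\<in>c_obj \<I>. \<forall>x\<in>c_obj C.
        c_comp C (pm_mu P i (c_cod \<I> g) k x)
                 (pm_arr P (c_id \<I> i) g (fo (pm_obj P (c_cod \<I> g) k) x)) =
        c_comp C (pm_mu P i (c_dom \<I> g) k x)
                 (fa (pm_obj P i (c_dom \<I> g)) (pm_arr P g (c_id \<I> k) x)))"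

definition pm_eq :: "('co,'ca) cat \<Rightarrow> ('io,'ia) cat \<Rightarrow> ('io,'ia,'co,'ca) pmonad \<Rightarrow> ('io,'ia,'co,'ca) pmonad \<Rightarrow> bool" where
  "pm_eq C \<I> P Q \<longleftrightarrow>
    (\<forall>i\<in>c_obj \<I>. \<forall>j\<in>c_obj \<I>.
       (\<forall>x\<in>c_obj C. fo (pm_obj P i j) x = fo (pm_obj Q i j) x) \<and>
       (\<forall>f\<in>c_arr C. fa (pm_obj P i j) f = fa (pm_obj Q i j) f)) \<and>
    (\<forall>u\<in>c_arr \<I>. \<forall>v\<in>c_arr \<I>. \<forall>x\<in>c_obj C. pm_arr P u v x = pm_arr Q u v x) \<and>
    (\<forall>i\<in>c_obj \<I>. \<forall>x\<in>c_obj C. pm_eta P i x = pm_eta Q i x) \<and>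
    (\<forall>i\<in>c_obj \<I>. \<forall>j\<in>c_obj \<I>. \<forall>k\<in>c_obj \<I>. \<forall>x\<in>c_obj C. pm_mu P i j k x = pm_mu Q i j k x)"

record ('ko,'ka,'co,'ca) cgm_gu =
  g_cat  :: "('ko,'ka) cat"
  g_T    :: "'ka \<Rightarrow> ('co,'ca) efun"
  g_eta  :: "'ko \<Rightarrow> 'co \<Rightarrow> 'ca"
  g_mu   :: "'ka \<Rightarrow> 'ka \<Rightarrow> 'co \<Rightarrow> 'ca"
  g_S    :: "'ka set"
  g_ueta :: "'ka \<Rightarrow> 'co \<Rightarrow> 'ca"

definition cat_graded_monad :: "('co,'ca) cat \<Rightarrow> ('ko,'ka,'co,'ca) cgm_gu \<Rightarrow> bool" where
  "cat_graded_monad C G \<longleftrightarrow> (let K = g_cat G in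
    category K \<and>
    (\<forall>f\<in>c_arr K. endofunctor C (g_T G f)) \<and>
    (\<forall>i\<in>c_obj K. nat_trans C Id_fun (g_T G (c_id K i)) (g_eta G i)) \<and>
    (\<forall>f\<in>c_arr K. \<forall>g\<in>c_arr K. c_cod K f = c_dom K g \<longrightarrow>
        nat_trans C (fcomp (g_T G f) (g_T G g)) (g_T G (c_comp K g f)) (g_mu G f g)) \<and>
    \<comment> \<open>unit laws, for f : I \<rightarrow> J\<close>
    (\<forall>f\<in>c_arr K. \<forall>x\<in>c_obj C.
        c_comp C (g_mu G (c_id K (c_dom K f)) f x) (g_eta G (c_dom K f) (fo (g_T G f) x))
          = c_id C (fo (g_T G f) x) \<and>
        c_comp C (g_mu G f (c_id K (c_cod K f)) x) (fa (g_T G f) (g_eta G (c_cod K f) x))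
          = c_id C (fo (g_T G f) x)) \<and>
    \<comment> \<open>associativity\<close>
    (\<forall>f\<in>c_arr K. \<forall>g\<in>c_arr K. \<forall>h\<in>c_arr K. \<forall>x\<in>c_obj C.
        c_cod K f = c_dom K g \<longrightarrow> c_cod K g = c_dom K h \<longrightarrow>
        c_comp C (g_mu G (c_comp K g f) h x) (g_mu G f g (fo (g_T G h) x)) =
        c_comp C (g_mu G f (c_comp K h g) x) (fa (g_T G f) (g_mu G g h x))))"

definition generalised_unit :: "('co,'ca) cat \<Rightarrow> ('ko,'ka,'co,'ca) cgm_gu \<Rightarrow> bool" where
  "generalised_unit C G \<longleftrightarrow> (let K = g_cat G; S = g_S G in
    \<comment> \<open>S is a wide subcategory of K\<close>
    S \<subseteq> c_arr K \<and>
    (\<forall>i\<in>c_obj K. c_id K i \<in> S) \<and>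
    (\<forall>f\<in>S. \<forall>g\<in>S. c_cod K f = c_dom K g \<longrightarrow> c_comp K g f \<in> S) \<and>
    \<comment> \<open>the generalised unit\<close>
    (\<forall>f\<in>S. nat_trans C Id_fun (g_T G f) (g_ueta G f)) \<and>
    (\<forall>f\<in>S. \<forall>g\<in>S. \<forall>x\<in>c_obj C. c_cod K f = c_dom K g \<longrightarrow>
        c_comp C (g_mu G f g x) (c_comp C (fa (g_T G f) (g_ueta G g x)) (g_ueta G f x))
          = g_ueta G (c_comp K g f) x) \<and>
    (\<forall>i\<in>c_obj K. \<forall>x\<in>c_obj C. g_ueta G (c_id K i) x = g_eta G i x))"

definition cgm_with_gu :: "('co,'ca) cat \<Rightarrow> ('ko,'ka,'co,'ca) cgm_gu \<Rightarrow> bool" where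
  "cgm_with_gu C G \<longleftrightarrow> cat_graded_monad C G \<and> generalised_unit C G"

definition cgm_eq :: "('co,'ca) cat \<Rightarrow> ('ko,'ka,'co,'ca) cgm_gu \<Rightarrow> ('ko,'ka,'co,'ca) cgm_gu \<Rightarrow> bool" where
  "cgm_eq C G H \<longleftrightarrow> (let K = g_cat G; L = g_cat H in
    c_obj K = c_obj L \<and> c_arr K = c_arr L \<and>
    (\<forall>f\<in>c_arr K. c_dom K f = c_dom L f \<and> c_cod K f = c_cod L f) \<and>
    (\<forall>i\<in>c_obj K. c_id K i = c_id L i) \<and>
    (\<forall>f\<in>c_arr K. \<forall>g\<in>c_arr K. c_cod K f = c_dom K g \<longrightarrow> c_comp K g f = c_comp L g f) \<and>
    (\<forall>f\<in>c_arr K. (\<forall>x\<in>c_obj C. fo (g_T G f) x = fo (g_T H f) x) \<and>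
                  (\<forall>a\<in>c_arr C. fa (g_T G f) a = fa (g_T H f) a)) \<and>
    (\<forall>i\<in>c_obj K. \<forall>x\<in>c_obj C. g_eta G i x = g_eta H i x) \<and>
    (\<forall>f\<in>c_arr K. \<forall>g\<in>c_arr K. \<forall>x\<in>c_obj C. c_cod K f = c_dom K g \<longrightarrow> g_mu G f g x = g_mu H f g x) \<and>
    g_S G = g_S H \<and>
    (\<forall>f\<in>g_S G. \<forall>x\<in>c_obj C. g_ueta G f x = g_ueta H f x))"

end

theory Submission
  imports Defs
begin

definition KI :: "('io,'ia) cat \<Rightarrow> ('io, 'io \<times> 'io \<times> 'ia option) cat" where
"KI I = \<lparr>c_obj = c_obj I,
  c_arr = {(i,j,None) | i j. i \<in> c_obj I \<and> j \<in> c_obj I} \<union> {(c_dom I f, c_cod I f, Some f) | f. f \<in> c_arr I},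
  c_dom = (\<lambda>a. fst a), c_cod = (\<lambda>a. fst (snd a)), c_id = (\<lambda>i. (i,i,Some (c_id I i))),
  c_comp = (\<lambda>b a. (fst a, fst (snd b), case (snd (snd a), snd (snd b)) of (Some f, Some g) \<Rightarrow> Some (c_comp I g f) | _ \<Rightarrow> None))\<rparr>"

lemma cat_facts:
  assumes "category C"
  shows "f \<in> c_arr C \<Longrightarrow> c_dom C f \<in> c_obj C"
    "f \<in> c_arr C \<Longrightarrow> c_cod C f \<in> c_obj C"
    "x \<in> c_obj C \<Longrightarrow> c_id C x \<in> c_arr C"
    "x \<in> c_obj C \<Longrightarrow> c_dom C (c_id C x) = x"
    "x \<in> c_obj C \<Longrightarrow> c_cod C (c_id C x) = x"
    "f \<in> c_arr C \<Longrightarrow> g \<in> c_arr C \<Longrightarrow> c_cod C f = c_dom C g \<Longrightarrow> c_comp C g f \<in> c_arr C"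
    "f \<in> c_arr C \<Longrightarrow> g \<in> c_arr C \<Longrightarrow> c_cod C f = c_dom C g \<Longrightarrow> c_dom C (c_comp C g f) = c_dom C f"
    "f \<in> c_arr C \<Longrightarrow> g \<in> c_arr C \<Longrightarrow> c_cod C f = c_dom C g \<Longrightarrow> c_cod C (c_comp C g f) = c_cod C g"
    "f \<in> c_arr C \<Longrightarrow> c_comp C (c_id C (c_cod C f)) f = f"
    "f \<in> c_arr C \<Longrightarrow> c_comp C f (c_id C (c_dom C f)) = f"
    "f \<in> c_arr C \<Longrightarrow> g \<in> c_arr C \<Longrightarrow> h \<in> c_arr C \<Longrightarrow> c_cod C f = c_dom C g \<Longrightarrow> c_cod C g = c_dom C h \<Longrightarrow>
        c_comp C h (c_comp C g f) = c_comp C (c_comp C h g) f"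
  using assms unfolding category_def by blast+

lemma KI_cat: assumes "category I" shows "category (KI I)"
  using assms unfolding category_def KI_def
  apply (simp)
  apply (intro conjI)
  apply (auto split: option.splits)
  done

lemma KI_simps[simp]:
  "c_obj (KI I) = c_obj I" "c_dom (KI I) a = fst a" "c_cod (KI I) a = fst (snd a)"
  "c_id (KI I) i = (i,i,Some (c_id I i))"
  "fst (c_comp (KI I) b a) = fst a" "fst (snd (c_comp (KI I) b a)) = fst (snd b)"
  by (simp_all add: KI_def)

lemma KI_arr_obj: assumes "category I" "a \<in> c_arr (KI I)"
  shows "fst a \<in> c_obj I" "fst (snd a) \<in> c_obj I"
  using assms cat_facts(1,2)[OF assms(1)] unfolding KI_def by auto

definition SI :: "('io,'ia) cat \<Rightarrow> ('io \<times> 'io \<times> 'ia option) set" where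
  "SI I = {(c_dom I f, c_cod I f, Some f) | f. f \<in> c_arr I}"

definition Phi :: "('co,'ca) cat \<Rightarrow> ('io,'ia) cat \<Rightarrow> ('io,'ia,'co,'ca) pmonad \<Rightarrow> ('io, 'io \<times> 'io \<times> 'ia option, 'co,'ca) cgm_gu" where
"Phi C I P = \<lparr>g_cat = KI I, g_T = (\<lambda>a. pm_obj P (fst a) (fst (snd a))), g_eta = pm_eta P,
   g_mu = (\<lambda>a b. pm_mu P (fst a) (fst (snd a)) (fst (snd b))), g_S = SI I,
   g_ueta = (\<lambda>a x. c_comp C (pm_arr P (c_id I (fst a)) (the (snd (snd a))) x) (pm_eta P (fst a) x))\<rparr>"

lemma pmf:
  assumes "param_monad C I P"
  shows
   pm_endo: "i \<in> c_obj I \<Longrightarrow> j \<in> c_obj I \<Longrightarrow> endofunctor C (pm_obj P i j)"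
   and pm_arr_nat: "u \<in> c_arr I \<Longrightarrow> v \<in> c_arr I \<Longrightarrow>
        nat_trans C (pm_obj P (c_cod I u) (c_dom I v)) (pm_obj P (c_dom I u) (c_cod I v)) (pm_arr P u v)"
   and pm_arr_id: "i \<in> c_obj I \<Longrightarrow> j \<in> c_obj I \<Longrightarrow> x \<in> c_obj C \<Longrightarrow>
        pm_arr P (c_id I i) (c_id I j) x = c_id C (fo (pm_obj P i j) x)"
   and pm_arr_comp: "u \<in> c_arr I \<Longrightarrow> u' \<in> c_arr I \<Longrightarrow> v \<in> c_arr I \<Longrightarrow> v' \<in> c_arr I \<Longrightarrow> x \<in> c_obj C \<Longrightarrow>
        c_cod I u' = c_dom I u \<Longrightarrow> c_cod I v = c_dom I v' \<Longrightarrow>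
        pm_arr P (c_comp I u u') (c_comp I v' v) x = c_comp C (pm_arr P u' v' x) (pm_arr P u v x)"
   and pm_eta_nat: "i \<in> c_obj I \<Longrightarrow> nat_trans C Id_fun (pm_obj P i i) (pm_eta P i)"
   and pm_mu_nat: "i \<in> c_obj I \<Longrightarrow> j \<in> c_obj I \<Longrightarrow> k \<in> c_obj I \<Longrightarrow>
        nat_trans C (fcomp (pm_obj P i j) (pm_obj P j k)) (pm_obj P i k) (pm_mu P i j k)"
   and pm_unit1: "i \<in> c_obj I \<Longrightarrow> j \<in> c_obj I \<Longrightarrow> x \<in> c_obj C \<Longrightarrow>
        c_comp C (pm_mu P i i j x) (pm_eta P i (fo (pm_obj P i j) x)) = c_id C (fo (pm_obj P i j) x)"
   and pm_unit2: "i \<in> c_obj I \<Longrightarrow> j \<in> c_obj I \<Longrightarrow> x \<in> c_obj C \<Longrightarrow>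
        c_comp C (pm_mu P i j j x) (fa (pm_obj P i j) (pm_eta P j x)) = c_id C (fo (pm_obj P i j) x)"
   and pm_assoc: "i \<in> c_obj I \<Longrightarrow> j \<in> c_obj I \<Longrightarrow> k \<in> c_obj I \<Longrightarrow> l \<in> c_obj I \<Longrightarrow> x \<in> c_obj C \<Longrightarrow>
        c_comp C (pm_mu P i k l x) (pm_mu P i j k (fo (pm_obj P k l) x)) =
        c_comp C (pm_mu P i j l x) (fa (pm_obj P i j) (pm_mu P j k l x))"
   and pm_eta_dinat: "f \<in> c_arr I \<Longrightarrow> x \<in> c_obj C \<Longrightarrow>
        c_comp C (pm_arr P (c_id I (c_dom I f)) f x) (pm_eta P (c_dom I f) x) =
        c_comp C (pm_arr P f (c_id I (c_cod I f)) x) (pm_eta P (c_cod I f) x)"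
   and pm_mu_natI: "u \<in> c_arr I \<Longrightarrow> j \<in> c_obj I \<Longrightarrow> k \<in> c_obj I \<Longrightarrow> x \<in> c_obj C \<Longrightarrow>
        c_comp C (pm_arr P u (c_id I k) x) (pm_mu P (c_cod I u) j k x) =
        c_comp C (pm_mu P (c_dom I u) j k x) (pm_arr P u (c_id I j) (fo (pm_obj P j k) x))"
   and pm_mu_natK: "i \<in> c_obj I \<Longrightarrow> j \<in> c_obj I \<Longrightarrow> w \<in> c_arr I \<Longrightarrow> x \<in> c_obj C \<Longrightarrow>
        c_comp C (pm_arr P (c_id I i) w x) (pm_mu P i j (c_dom I w) x) =
        c_comp C (pm_mu P i j (c_cod I w) x) (fa (pm_obj P i j) (pm_arr P (c_id I j) w x))"
  using assms unfolding param_monad_def by (simp_all only: Ball_def)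

lemma endo_facts:
  assumes "endofunctor C F"
  shows "x \<in> c_obj C \<Longrightarrow> fo F x \<in> c_obj C"
   "f \<in> c_arr C \<Longrightarrow> fa F f \<in> c_arr C"
   "f \<in> c_arr C \<Longrightarrow> c_dom C (fa F f) = fo F (c_dom C f)"
   "f \<in> c_arr C \<Longrightarrow> c_cod C (fa F f) = fo F (c_cod C f)"
   "x \<in> c_obj C \<Longrightarrow> fa F (c_id C x) = c_id C (fo F x)"
   "f \<in> c_arr C \<Longrightarrow> g \<in> c_arr C \<Longrightarrow> c_cod C f = c_dom C g \<Longrightarrow>
        fa F (c_comp C g f) = c_comp C (fa F g) (fa F f)"
  using assms unfolding endofunctor_def by blast+

lemma nt_facts:
  assumes "nat_trans C F G a"
  shows "x \<in> c_obj C \<Longrightarrow> a x \<in> c_arr C"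
   "x \<in> c_obj C \<Longrightarrow> c_dom C (a x) = fo F x"
   "x \<in> c_obj C \<Longrightarrow> c_cod C (a x) = fo G x"
   "f \<in> c_arr C \<Longrightarrow> c_comp C (a (c_cod C f)) (fa F f) = c_comp C (fa G f) (a (c_dom C f))"
  using assms unfolding nat_trans_def by blast+

lemma Id_fun_simps[simp]: "fo Id_fun x = x" "fa Id_fun f = f" by (simp_all add: Id_fun_def)
lemma fcomp_simps[simp]: "fo (fcomp F G) x = fo F (fo G x)" "fa (fcomp F G) f = fa F (fa G f)"
  by (simp_all add: fcomp_def)

lemma Phi_cgm:
  assumes C: "category C" and I: "category I" and P: "param_monad C I P"
  shows "cat_graded_monad C (Phi C I P)"
  unfolding cat_graded_monad_def Let_def
proof (intro conjI ballI impI)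
  show "category (g_cat (Phi C I P))" using KI_cat[OF I] by (simp add: Phi_def)
next
  fix f assume "f \<in> c_arr (g_cat (Phi C I P))"
  then show "endofunctor C (g_T (Phi C I P) f)"
    using KI_arr_obj[OF I] pm_endo[OF P] by (simp add: Phi_def)
next
  fix i assume "i \<in> c_obj (g_cat (Phi C I P))"
  then show "nat_trans C Id_fun (g_T (Phi C I P) (c_id (g_cat (Phi C I P)) i)) (g_eta (Phi C I P) i)"
    using pm_eta_nat[OF P] by (simp add: Phi_def)
next
  fix f g assume "f \<in> c_arr (g_cat (Phi C I P))" "g \<in> c_arr (g_cat (Phi C I P))"
     "c_cod (g_cat (Phi C I P)) f = c_dom (g_cat (Phi C I P)) g"
  then show "nat_trans C (fcomp (g_T (Phi C I P) f) (g_T (Phi C I P) g))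
        (g_T (Phi C I P) (c_comp (g_cat (Phi C I P)) g f)) (g_mu (Phi C I P) f g)"
    using KI_arr_obj[OF I] pm_mu_nat[OF P] by (simp add: Phi_def)
next
  fix f x assume "f \<in> c_arr (g_cat (Phi C I P))" "x \<in> c_obj C"
  then show "c_comp C (g_mu (Phi C I P) (c_id (g_cat (Phi C I P)) (c_dom (g_cat (Phi C I P)) f)) f x)
          (g_eta (Phi C I P) (c_dom (g_cat (Phi C I P)) f) (fo (g_T (Phi C I P) f) x)) =
         c_id C (fo (g_T (Phi C I P) f) x)"
    using KI_arr_obj[OF I] pm_unit1[OF P] by (simp add: Phi_def)
next
  fix f x assume "f \<in> c_arr (g_cat (Phi C I P))" "x \<in> c_obj C"
  then show "c_comp C (g_mu (Phi C I P) f (c_id (g_cat (Phi C I P)) (c_cod (g_cat (Phi C I P)) f)) x)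
          (fa (g_T (Phi C I P) f) (g_eta (Phi C I P) (c_cod (g_cat (Phi C I P)) f) x)) =
         c_id C (fo (g_T (Phi C I P) f) x)"
    using KI_arr_obj[OF I] pm_unit2[OF P] by (simp add: Phi_def)
next
  fix f g h x assume "f \<in> c_arr (g_cat (Phi C I P))" "g \<in> c_arr (g_cat (Phi C I P))"
    "h \<in> c_arr (g_cat (Phi C I P))" "x \<in> c_obj C"
    "c_cod (g_cat (Phi C I P)) f = c_dom (g_cat (Phi C I P)) g"
    "c_cod (g_cat (Phi C I P)) g = c_dom (g_cat (Phi C I P)) h"
  then show "c_comp C (g_mu (Phi C I P) (c_comp (g_cat (Phi C I P)) g f) h x)
          (g_mu (Phi C I P) f g (fo (g_T (Phi C I P) h) x)) =
         c_comp C (g_mu (Phi C I P) f (c_comp (g_cat (Phi C I P)) h g) x)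
          (fa (g_T (Phi C I P) f) (g_mu (Phi C I P) g h x))"
    using KI_arr_obj[OF I] pm_assoc[OF P] by (simp add: Phi_def)
qed

context
  fixes C :: "('co,'ca) cat" and I :: "('io,'ia) cat" and P :: "('io,'ia,'co,'ca) pmonad"
  assumes C: "category C" and I: "category I" and P: "param_monad C I P"
begin

lemmas Cf[simp] = cat_facts(1-10)[OF C]
lemmas If[simp] = cat_facts(1-10)[OF I]

lemma assocC: "f \<in> c_arr C \<Longrightarrow> g \<in> c_arr C \<Longrightarrow> h \<in> c_arr C \<Longrightarrow> c_cod C f = c_dom C g \<Longrightarrow> c_cod C g = c_dom C h \<Longrightarrow>
        c_comp C h (c_comp C g f) = c_comp C (c_comp C h g) f"
  by (rule cat_facts(11)[OF C])

lemma Pobj[simp]: "i \<in> c_obj I \<Longrightarrow> j \<in> c_obj I \<Longrightarrow> x \<in> c_obj C \<Longrightarrow> fo (pm_obj P i j) x \<in> c_obj C"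
  using endo_facts(1)[OF pm_endo[OF P]] by blast

lemma Pfa[simp]: assumes "i \<in> c_obj I" "j \<in> c_obj I" "f \<in> c_arr C"
  shows "fa (pm_obj P i j) f \<in> c_arr C" "c_dom C (fa (pm_obj P i j) f) = fo (pm_obj P i j) (c_dom C f)"
    "c_cod C (fa (pm_obj P i j) f) = fo (pm_obj P i j) (c_cod C f)"
  using endo_facts(2-4)[OF pm_endo[OF P assms(1,2)] assms(3)] by auto

lemma Pfa_comp: "i \<in> c_obj I \<Longrightarrow> j \<in> c_obj I \<Longrightarrow> f \<in> c_arr C \<Longrightarrow> g \<in> c_arr C \<Longrightarrow> c_cod C f = c_dom C g \<Longrightarrow>
   fa (pm_obj P i j) (c_comp C g f) = c_comp C (fa (pm_obj P i j) g) (fa (pm_obj P i j) f)"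
  using endo_facts(6)[OF pm_endo[OF P]] by blast

lemma eta_t[simp]: assumes "i \<in> c_obj I" "x \<in> c_obj C"
  shows "pm_eta P i x \<in> c_arr C" "c_dom C (pm_eta P i x) = x" "c_cod C (pm_eta P i x) = fo (pm_obj P i i) x"
  using nt_facts(1-3)[OF pm_eta_nat[OF P assms(1)] assms(2)] by auto

lemma mu_t[simp]: assumes "i \<in> c_obj I" "j \<in> c_obj I" "k \<in> c_obj I" "x \<in> c_obj C"
  shows "pm_mu P i j k x \<in> c_arr C" "c_dom C (pm_mu P i j k x) = fo (pm_obj P i j) (fo (pm_obj P j k) x)"
   "c_cod C (pm_mu P i j k x) = fo (pm_obj P i k) x"
  using nt_facts(1-3)[OF pm_mu_nat[OF P assms(1-3)] assms(4)] by auto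

lemma arr_t[simp]: assumes "u \<in> c_arr I" "v \<in> c_arr I" "x \<in> c_obj C"
  shows "pm_arr P u v x \<in> c_arr C" "c_dom C (pm_arr P u v x) = fo (pm_obj P (c_cod I u) (c_dom I v)) x"
   "c_cod C (pm_arr P u v x) = fo (pm_obj P (c_dom I u) (c_cod I v)) x"
  using nt_facts(1-3)[OF pm_arr_nat[OF P assms(1,2)] assms(3)] by auto

lemma arr_decomp: assumes "u \<in> c_arr I" "v \<in> c_arr I" "x \<in> c_obj C"
  shows "pm_arr P u v x = c_comp C (pm_arr P (c_id I (c_dom I u)) v x) (pm_arr P u (c_id I (c_dom I v)) x)"
  using pm_arr_comp[OF P assms(1) _ _ assms(2) assms(3), of "c_id I (c_dom I u)" "c_id I (c_dom I v)"] assms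
  by simp

lemma R1: assumes u: "u \<in> c_arr I" and J: "J \<in> c_obj I" and x: "x \<in> c_obj C"
  shows "pm_arr P u (c_id I J) x = c_comp C (pm_mu P (c_dom I u) (c_cod I u) J x)
     (c_comp C (pm_arr P (c_id I (c_dom I u)) u (fo (pm_obj P (c_cod I u) J) x))
               (pm_eta P (c_dom I u) (fo (pm_obj P (c_cod I u) J) x)))"
proof -
  define i' where "i' = c_dom I u"
  define i where "i = c_cod I u"
  define y where "y = fo (pm_obj P i J) x"
  have i'[simp]: "i' \<in> c_obj I" and i[simp]: "i \<in> c_obj I" using u by (simp_all add: i'_def i_def)
  have y[simp]: "y \<in> c_obj C" using x J by (simp add: y_def)
  have "pm_arr P u (c_id I J) x = c_comp C (pm_arr P u (c_id I J) x) (c_id C y)"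
    using u J x Cf(10)[of "pm_arr P u (c_id I J) x"] by (simp add: y_def i_def)
  also have "\<dots> = c_comp C (pm_arr P u (c_id I J) x) (c_comp C (pm_mu P i i J x) (pm_eta P i y))"
    using pm_unit1[OF P i J x] by (simp add: y_def)
  also have "\<dots> = c_comp C (c_comp C (pm_arr P u (c_id I J) x) (pm_mu P i i J x)) (pm_eta P i y)"
    using u J x by (intro assocC) (simp_all add: y_def i_def)
  also have "\<dots> = c_comp C (c_comp C (pm_mu P i' i J x) (pm_arr P u (c_id I i) y)) (pm_eta P i y)"
    using pm_mu_natI[OF P u i J x] by (simp add: y_def i_def i'_def)
  also have "\<dots> = c_comp C (pm_mu P i' i J x) (c_comp C (pm_arr P u (c_id I i) y) (pm_eta P i y))"
    using u J x by (intro assocC[symmetric]) (simp_all add: y_def i_def i'_def)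
  also have "\<dots> = c_comp C (pm_mu P i' i J x) (c_comp C (pm_arr P (c_id I i') u y) (pm_eta P i' y))"
    using pm_eta_dinat[OF P u y] by (simp add: i_def i'_def)
  finally show ?thesis by (simp add: y_def i_def i'_def)
qed

lemma R2: assumes v: "v \<in> c_arr I" and i[simp]: "i \<in> c_obj I" and x: "x \<in> c_obj C"
  shows "pm_arr P (c_id I i) v x = c_comp C (pm_mu P i (c_dom I v) (c_cod I v) x)
     (fa (pm_obj P i (c_dom I v)) (c_comp C (pm_arr P (c_id I (c_dom I v)) v x) (pm_eta P (c_dom I v) x)))"
proof -
  define j where "j = c_dom I v"
  define k where "k = c_cod I v"
  have j[simp]: "j \<in> c_obj I" and k[simp]: "k \<in> c_obj I" using v by (simp_all add: j_def k_def)
  have "pm_arr P (c_id I i) v x = c_comp C (pm_arr P (c_id I i) v x) (c_id C (fo (pm_obj P i j) x))"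
    using v x Cf(10)[of "pm_arr P (c_id I i) v x"] by (simp add: j_def)
  also have "\<dots> = c_comp C (pm_arr P (c_id I i) v x) (c_comp C (pm_mu P i j j x) (fa (pm_obj P i j) (pm_eta P j x)))"
    using pm_unit2[OF P i j x] by simp
  also have "\<dots> = c_comp C (c_comp C (pm_arr P (c_id I i) v x) (pm_mu P i j j x)) (fa (pm_obj P i j) (pm_eta P j x))"
    using v x by (intro assocC) (simp_all add: j_def)
  also have "\<dots> = c_comp C (c_comp C (pm_mu P i j k x) (fa (pm_obj P i j) (pm_arr P (c_id I j) v x))) (fa (pm_obj P i j) (pm_eta P j x))"
    using pm_mu_natK[OF P i j v x] by (simp add: j_def k_def)
  also have "\<dots> = c_comp C (pm_mu P i j k x) (c_comp C (fa (pm_obj P i j) (pm_arr P (c_id I j) v x)) (fa (pm_obj P i j) (pm_eta P j x)))"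
    using v x by (intro assocC[symmetric]) (simp_all add: j_def k_def)
  also have "\<dots> = c_comp C (pm_mu P i j k x) (fa (pm_obj P i j) (c_comp C (pm_arr P (c_id I j) v x) (pm_eta P j x)))"
    using v x by (subst Pfa_comp) (simp_all add: j_def)
  finally show ?thesis by (simp add: j_def k_def)
qed


lemma ueta_nat: assumes u: "u \<in> c_arr I"
  shows "nat_trans C Id_fun (pm_obj P (c_dom I u) (c_cod I u))
     (\<lambda>x. c_comp C (pm_arr P (c_id I (c_dom I u)) u x) (pm_eta P (c_dom I u) x))"
  unfolding nat_trans_def
proof (intro conjI ballI)
  define i where "i = c_dom I u"
  define j where "j = c_cod I u"
  have i[simp]: "i \<in> c_obj I" and j[simp]: "j \<in> c_obj I" using u by (simp_all add: i_def j_def)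
  fix x assume x: "x \<in> c_obj C"
  show "c_comp C (pm_arr P (c_id I (c_dom I u)) u x) (pm_eta P (c_dom I u) x) \<in> c_arr C"
     "c_dom C (c_comp C (pm_arr P (c_id I (c_dom I u)) u x) (pm_eta P (c_dom I u) x)) = fo Id_fun x"
     "c_cod C (c_comp C (pm_arr P (c_id I (c_dom I u)) u x) (pm_eta P (c_dom I u) x)) = fo (pm_obj P (c_dom I u) (c_cod I u)) x"
    using u x by simp_all
next
  define i where "i = c_dom I u"
  define j where "j = c_cod I u"
  have i[simp]: "i \<in> c_obj I" and j[simp]: "j \<in> c_obj I" using u by (simp_all add: i_def j_def)
  fix h assume h: "h \<in> c_arr C"
  define a where "a = c_dom C h"
  define b where "b = c_cod C h"
  have a[simp]: "a \<in> c_obj C" and b[simp]: "b \<in> c_obj C" using h by (simp_all add: a_def b_def)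
  have iu: "c_id I i \<in> c_arr I" "c_cod I (c_id I i) = i" "c_dom I (c_id I i) = i" by simp_all
  have ci: "c_cod I u = j" "c_dom I u = i" by (simp_all add: i_def j_def)
  have n1: "c_comp C (pm_eta P i b) h = c_comp C (fa (pm_obj P i i) h) (pm_eta P i a)"
    using nt_facts(4)[OF pm_eta_nat[OF P i] h] by (simp add: a_def b_def)
  have n2: "c_comp C (pm_arr P (c_id I i) u b) (fa (pm_obj P i i) h) = c_comp C (fa (pm_obj P i j) h) (pm_arr P (c_id I i) u a)"
    using nt_facts(4)[OF pm_arr_nat[OF P iu(1) u] h] by (simp add: a_def b_def ci iu)
  have "c_comp C (c_comp C (pm_arr P (c_id I i) u b) (pm_eta P i b)) h
      = c_comp C (pm_arr P (c_id I i) u b) (c_comp C (pm_eta P i b) h)"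
    using u h by (intro assocC[symmetric]) (simp_all add: b_def ci)
  also have "\<dots> = c_comp C (pm_arr P (c_id I i) u b) (c_comp C (fa (pm_obj P i i) h) (pm_eta P i a))"
    by (simp add: n1)
  also have "\<dots> = c_comp C (c_comp C (pm_arr P (c_id I i) u b) (fa (pm_obj P i i) h)) (pm_eta P i a)"
    using u h by (intro assocC) (simp_all add: a_def b_def ci)
  also have "\<dots> = c_comp C (c_comp C (fa (pm_obj P i j) h) (pm_arr P (c_id I i) u a)) (pm_eta P i a)"
    by (simp add: n2)
  also have "\<dots> = c_comp C (fa (pm_obj P i j) h) (c_comp C (pm_arr P (c_id I i) u a) (pm_eta P i a))"
    using u h by (intro assocC[symmetric]) (simp_all add: a_def b_def ci)
  finally show "c_comp C (c_comp C (pm_arr P (c_id I (c_dom I u)) u (c_cod C h)) (pm_eta P (c_dom I u) (c_cod C h))) (fa Id_fun h) =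
         c_comp C (fa (pm_obj P (c_dom I u) (c_cod I u)) h)
          (c_comp C (pm_arr P (c_id I (c_dom I u)) u (c_dom C h)) (pm_eta P (c_dom I u) (c_dom C h)))"
    by (simp add: a_def b_def i_def j_def)
qed

lemma ueta_comp: assumes u: "u \<in> c_arr I" and v: "v \<in> c_arr I" and uv: "c_cod I u = c_dom I v" and x: "x \<in> c_obj C"
  shows "c_comp C (pm_mu P (c_dom I u) (c_cod I u) (c_cod I v) x)
     (c_comp C (fa (pm_obj P (c_dom I u) (c_cod I u)) (c_comp C (pm_arr P (c_id I (c_dom I v)) v x) (pm_eta P (c_dom I v) x)))
               (c_comp C (pm_arr P (c_id I (c_dom I u)) u x) (pm_eta P (c_dom I u) x)))
   = c_comp C (pm_arr P (c_id I (c_dom I u)) (c_comp I v u) x) (pm_eta P (c_dom I u) x)"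
proof -
  define i where "i = c_dom I u"
  define j where "j = c_cod I u"
  define k where "k = c_cod I v"
  have i[simp]: "i \<in> c_obj I" and j[simp]: "j \<in> c_obj I" and k[simp]: "k \<in> c_obj I"
    using u v by (simp_all add: i_def j_def k_def)
  have ci: "c_cod I u = j" "c_dom I u = i" "c_dom I v = j" "c_cod I v = k" using uv by (simp_all add: i_def j_def k_def)
  define a where "a = pm_eta P i x"
  define b where "b = pm_arr P (c_id I i) u x"
  define c where "c = fa (pm_obj P i j) (pm_eta P j x)"
  define d where "d = fa (pm_obj P i j) (pm_arr P (c_id I j) v x)"
  define m where "m = pm_mu P i j k x"
  define n where "n = pm_mu P i j j x"
  define e where "e = pm_arr P (c_id I i) v x"
  have t: "a \<in> c_arr C" "b \<in> c_arr C" "c \<in> c_arr C" "d \<in> c_arr C" "m \<in> c_arr C" "n \<in> c_arr C" "e \<in> c_arr C"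
    "c_cod C a = c_dom C b" "c_cod C b = c_dom C c" "c_cod C c = c_dom C d" "c_cod C d = c_dom C m"
    "c_cod C c = c_dom C n" "c_cod C n = c_dom C e" "c_cod C b = c_dom C e"
    using u v x by (simp_all add: a_def b_def c_def d_def m_def n_def e_def ci)
  have md: "c_comp C m d = c_comp C e n"
    using pm_mu_natK[OF P i j v x] by (simp add: m_def d_def e_def n_def ci)
  have nc: "c_comp C n c = c_id C (c_dom C e)"
    using pm_unit2[OF P i j x] u v x by (simp add: n_def c_def e_def ci)
  have ii: "c_comp I (c_id I i) (c_id I i) = c_id I i" using If(9)[of "c_id I i"] by simp
  have eb: "pm_arr P (c_id I i) (c_comp I v u) x = c_comp C e b"
    using ii pm_arr_comp[OF P _ _ u v x, of "c_id I i" "c_id I i"] uv by (simp add: e_def b_def ci)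
  have lhs: "c_comp C (fa (pm_obj P i j) (c_comp C (pm_arr P (c_id I j) v x) (pm_eta P j x))) = c_comp C (c_comp C d c)"
    using v x by (subst Pfa_comp) (simp_all add: d_def c_def ci)
  have "c_comp C m (c_comp C (c_comp C d c) (c_comp C b a)) = c_comp C (c_comp C m (c_comp C d c)) (c_comp C b a)"
    using t by (intro assocC) simp_all
  also have "\<dots> = c_comp C (c_comp C (c_comp C m d) c) (c_comp C b a)"
    using t by (subst assocC) simp_all
  also have "\<dots> = c_comp C (c_comp C e (c_comp C n c)) (c_comp C b a)"
    using t by (simp add: md assocC)
  also have "\<dots> = c_comp C e (c_comp C b a)"
    by (simp only: nc Cf(10)[OF t(7)])
  also have "\<dots> = c_comp C (c_comp C e b) a"
    using t by (intro assocC) simp_all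
  finally show ?thesis using lhs eb
    by (simp add: a_def b_def c_def d_def m_def n_def e_def ci i_def[symmetric] j_def[symmetric] k_def[symmetric])
qed


end


lemma Phi_gu:
  assumes C: "category C" and I: "category I" and P: "param_monad C I P"
  shows "generalised_unit C (Phi C I P)"
  unfolding generalised_unit_def Let_def
proof (intro conjI ballI impI)
  show "g_S (Phi C I P) \<subseteq> c_arr (g_cat (Phi C I P))"
    by (auto simp: Phi_def SI_def KI_def)
next
  fix i assume "i \<in> c_obj (g_cat (Phi C I P))"
  then show "c_id (g_cat (Phi C I P)) i \<in> g_S (Phi C I P)"
    using cat_facts(3-5)[OF I, of i] by (auto simp: Phi_def SI_def intro!: exI[of _ "c_id I i"])
next
  fix f g assume "f \<in> g_S (Phi C I P)" "g \<in> g_S (Phi C I P)" "c_cod (g_cat (Phi C I P)) f = c_dom (g_cat (Phi C I P)) g"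
  then obtain u v where u: "u \<in> c_arr I" "f = (c_dom I u, c_cod I u, Some u)"
     and v: "v \<in> c_arr I" "g = (c_dom I v, c_cod I v, Some v)" and uv: "c_cod I u = c_dom I v"
    by (auto simp: Phi_def SI_def)
  then show "c_comp (g_cat (Phi C I P)) g f \<in> g_S (Phi C I P)"
    using cat_facts(6-8)[OF I u(1) v(1) uv]
    by (auto simp: Phi_def SI_def KI_def intro!: exI[of _ "c_comp I v u"])
next
  fix f assume "f \<in> g_S (Phi C I P)"
  then obtain u where u: "u \<in> c_arr I" "f = (c_dom I u, c_cod I u, Some u)"
    by (auto simp: Phi_def SI_def)
  then show "nat_trans C Id_fun (g_T (Phi C I P) f) (g_ueta (Phi C I P) f)"
    using ueta_nat[OF C I P u(1)] by (simp add: Phi_def)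
next
  fix f g x assume "f \<in> g_S (Phi C I P)" "g \<in> g_S (Phi C I P)" "x \<in> c_obj C"
    "c_cod (g_cat (Phi C I P)) f = c_dom (g_cat (Phi C I P)) g"
  then obtain u v where u: "u \<in> c_arr I" "f = (c_dom I u, c_cod I u, Some u)"
     and v: "v \<in> c_arr I" "g = (c_dom I v, c_cod I v, Some v)" and uv: "c_cod I u = c_dom I v"
     and x: "x \<in> c_obj C"
    by (auto simp: Phi_def SI_def)
  then show "c_comp C (g_mu (Phi C I P) f g x)
          (c_comp C (fa (g_T (Phi C I P) f) (g_ueta (Phi C I P) g x)) (g_ueta (Phi C I P) f x)) =
         g_ueta (Phi C I P) (c_comp (g_cat (Phi C I P)) g f) x"
    using ueta_comp[OF C I P u(1) v(1) uv x] by (simp add: Phi_def KI_def)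
next
  fix i x assume i: "i \<in> c_obj (g_cat (Phi C I P))" and x: "x \<in> c_obj C"
  then have i': "i \<in> c_obj I" by (simp add: Phi_def)
  have "c_comp C (c_id C (fo (pm_obj P i i) x)) (pm_eta P i x) = pm_eta P i x"
    using cat_facts(9)[OF C, of "pm_eta P i x"] eta_t[OF C I P i' x] by simp
  then show "g_ueta (Phi C I P) (c_id (g_cat (Phi C I P)) i) x = g_eta (Phi C I P) i x"
    using pm_arr_id[OF P i' i' x] by (simp add: Phi_def)
qed

lemma Phi_inj:
  assumes C: "category C" and I: "category I" and P: "param_monad C I P" and Q: "param_monad C I Q"
    and eq: "cgm_eq C (Phi C I P) (Phi C I Q)"
  shows "pm_eq C I P Q"
proof -
  have Kg: "g_cat (Phi C I P) = KI I" "g_cat (Phi C I Q) = KI I" by (simp_all add: Phi_def)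
  have Tg: "\<And>f. f \<in> c_arr (KI I) \<Longrightarrow> (\<forall>x\<in>c_obj C. fo (g_T (Phi C I P) f) x = fo (g_T (Phi C I Q) f) x) \<and>
                  (\<forall>a\<in>c_arr C. fa (g_T (Phi C I P) f) a = fa (g_T (Phi C I Q) f) a)"
   and Eg: "\<And>i x. i \<in> c_obj I \<Longrightarrow> x \<in> c_obj C \<Longrightarrow> g_eta (Phi C I P) i x = g_eta (Phi C I Q) i x"
   and Mg: "\<And>f g x. f\<in>c_arr (KI I) \<Longrightarrow> g\<in>c_arr (KI I) \<Longrightarrow> x\<in>c_obj C \<Longrightarrow> fst (snd f) = fst g \<Longrightarrow> g_mu (Phi C I P) f g x = g_mu (Phi C I Q) f g x"
   and Ug: "\<And>f x. f\<in>g_S (Phi C I P) \<Longrightarrow> x\<in>c_obj C \<Longrightarrow> g_ueta (Phi C I P) f x = g_ueta (Phi C I Q) f x"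
    using eq unfolding cgm_eq_def Let_def Kg by (simp_all add: Kg)
  have None: "\<And>i j. i \<in> c_obj I \<Longrightarrow> j \<in> c_obj I \<Longrightarrow> (i,j,None) \<in> c_arr (KI I)"
    by (simp add: KI_def)
  have obj: "\<And>i j x. i \<in> c_obj I \<Longrightarrow> j \<in> c_obj I \<Longrightarrow> x\<in>c_obj C \<Longrightarrow> fo (pm_obj P i j) x = fo (pm_obj Q i j) x"
    using Tg None by (fastforce simp: Phi_def)
  have fa: "\<And>i j f. i \<in> c_obj I \<Longrightarrow> j \<in> c_obj I \<Longrightarrow> f\<in>c_arr C \<Longrightarrow> fa (pm_obj P i j) f = fa (pm_obj Q i j) f"
    using Tg None by (fastforce simp: Phi_def)
  have eta: "\<And>i x. i \<in> c_obj I \<Longrightarrow> x \<in> c_obj C \<Longrightarrow> pm_eta P i x = pm_eta Q i x"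
    using Eg by (simp add: Phi_def)
  have mu: "\<And>i j k x. i \<in> c_obj I \<Longrightarrow> j \<in> c_obj I \<Longrightarrow> k \<in> c_obj I \<Longrightarrow> x \<in> c_obj C \<Longrightarrow> pm_mu P i j k x = pm_mu Q i j k x"
  proof -
    fix i j k x assume "i \<in> c_obj I" "j \<in> c_obj I" "k \<in> c_obj I" "x \<in> c_obj C"
    then show "pm_mu P i j k x = pm_mu Q i j k x"
      using Mg[OF None None, of i j j k x] by (simp add: Phi_def)
  qed
  have ue: "\<And>u x. u \<in> c_arr I \<Longrightarrow> x \<in> c_obj C \<Longrightarrow>
     c_comp C (pm_arr P (c_id I (c_dom I u)) u x) (pm_eta P (c_dom I u) x) =
     c_comp C (pm_arr Q (c_id I (c_dom I u)) u x) (pm_eta Q (c_dom I u) x)"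
  proof -
    fix u x assume u: "u \<in> c_arr I" and x: "x \<in> c_obj C"
    have "(c_dom I u, c_cod I u, Some u) \<in> g_S (Phi C I P)" using u by (auto simp: Phi_def SI_def)
    from Ug[OF this x] show "c_comp C (pm_arr P (c_id I (c_dom I u)) u x) (pm_eta P (c_dom I u) x) =
     c_comp C (pm_arr Q (c_id I (c_dom I u)) u x) (pm_eta Q (c_dom I u) x)" by (simp add: Phi_def)
  qed
  have arr: "\<And>u v x. u \<in> c_arr I \<Longrightarrow> v \<in> c_arr I \<Longrightarrow> x \<in> c_obj C \<Longrightarrow> pm_arr P u v x = pm_arr Q u v x"
  proof -
    fix u v x assume u: "u \<in> c_arr I" and v: "v \<in> c_arr I" and x: "x \<in> c_obj C"
    have du: "c_dom I u \<in> c_obj I" "c_cod I u \<in> c_obj I" "c_dom I v \<in> c_obj I" "c_cod I v \<in> c_obj I"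
      using u v cat_facts(1,2)[OF I] by auto
    have y: "fo (pm_obj P (c_cod I u) (c_dom I v)) x \<in> c_obj C" using Pobj[OF C I P du(2,3) x] .
    have r1: "pm_arr P u (c_id I (c_dom I v)) x = pm_arr Q u (c_id I (c_dom I v)) x"
      unfolding R1[OF C I P u du(3) x] R1[OF C I Q u du(3) x]
      using ue[OF u y] mu[OF du(1,2,3) x] obj[OF du(2,3) x] by simp
    have ueA: "c_comp C (pm_arr P (c_id I (c_dom I v)) v x) (pm_eta P (c_dom I v) x) \<in> c_arr C"
      using nt_facts(1)[OF ueta_nat[OF C I P v] x] .
    have r2: "pm_arr P (c_id I (c_dom I u)) v x = pm_arr Q (c_id I (c_dom I u)) v x"
      unfolding R2[OF C I P v du(1) x] R2[OF C I Q v du(1) x]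
      using ue[OF v x] mu[OF du(1,3,4) x] fa[OF du(1,3) ueA] by simp
    show "pm_arr P u v x = pm_arr Q u v x"
      using arr_decomp[OF C I P u v x] arr_decomp[OF C I Q u v x] r1 r2 by simp
  qed
  show ?thesis unfolding pm_eq_def using obj fa eta mu arr by blast
qed

theorem proposition36:
  fixes C :: "('co,'ca) cat" and \<I> :: "('io,'ia) cat"
  assumes "category C" and "category \<I>"
  shows "\<exists>\<Phi> :: ('io,'ia,'co,'ca) pmonad \<Rightarrow> ('io, 'io \<times> 'io \<times> 'ia option, 'co,'ca) cgm_gu.
           (\<forall>P. param_monad C \<I> P \<longrightarrow> cgm_with_gu C (\<Phi> P)) \<and>
           (\<forall>P Q. param_monad C \<I> P \<longrightarrow> param_monad C \<I> Q \<longrightarrow>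
                  cgm_eq C (\<Phi> P) (\<Phi> Q) \<longrightarrow> pm_eq C \<I> P Q)"
  apply (rule exI[of _ "Phi C \<I>"])
  using Phi_cgm[OF assms] Phi_gu[OF assms] Phi_inj[OF assms]
  by (auto simp: cgm_with_gu_def)

end
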